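(* Let $R$ be an $n\times n$ symmetric random matrix whose entries $R_{i,j}$, $1\leq i\leq j\leq n$, are independent with $R_{i,j}=1-p_{i,j}$ with probability $p_{i,j}$ and $R_{i,j}=-p_{i,j}$ with probability $1-p_{i,j}$. Let $p=\max_{i,j}p_{i,j}$ and suppose $p\geq c\frac{\log^3 n}{n}$ for a sufficiently large absolute constant $c$. Then for every $u\in\{1,\dots,n\}$, every positive integer $k$, and every sufficiently large constant $C$, $$\Pr\Big[|e_u^\top R^ks|>\frac1{\sqrt n}\big(C\sqrt{np\log n}\big)^k\Big]\leq\exp(-\Omega(C\log n)).$$
   Context: $s\in\mathbb{R}^n$ is the signal vector with $s(i)=1/\sqrt n$ for $i\in S$ and $-1/\sqrt n$ for $i\in T$, where $S,T$ partition $\{1,\dots,n\}$ into halves; $e_u$ is the $u$-th standard basis vector. *)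

theory Defs
  imports "HOL-Probability.Probability"
begin

text \<open>Vectors in R^n are functions nat => real, indices 0..n-1; matrices nat => nat => real.\<close>

definition mat_vec :: "nat \<Rightarrow> (nat \<Rightarrow> nat \<Rightarrow> real) \<Rightarrow> (nat \<Rightarrow> real) \<Rightarrow> (nat \<Rightarrow> real)" where
  "mat_vec n A v = (\<lambda>i. \<Sum>j<n. A i j * v j)"

definition upper_idx :: "nat \<Rightarrow> (nat \<times> nat) set" where
  "upper_idx n = {(i, j). i \<le> j \<and> j < n}"

definition entry_pmf :: "real \<Rightarrow> real pmf" where
  "entry_pmf q = map_pmf (\<lambda>b. if b then 1 - q else - q) (bernoulli_pmf q)"

definition entries_pmf :: "nat \<Rightarrow> (nat \<Rightarrow> nat \<Rightarrow> real) \<Rightarrow> (nat \<times> nat \<Rightarrow> real) pmf" where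
  "entries_pmf n P = Pi_pmf (upper_idx n) 0 (\<lambda>(i, j). entry_pmf (P i j))"

definition sym_mat :: "(nat \<times> nat \<Rightarrow> real) \<Rightarrow> nat \<Rightarrow> nat \<Rightarrow> real" where
  "sym_mat X i j = X (min i j, max i j)"

definition signal :: "nat \<Rightarrow> nat set \<Rightarrow> nat \<Rightarrow> real" where
  "signal n S i = (if i \<in> S then 1 / sqrt (real n) else - 1 / sqrt (real n))"

definition pmax :: "nat \<Rightarrow> (nat \<Rightarrow> nat \<Rightarrow> real) \<Rightarrow> real" where
  "pmax n P = Max ((\<lambda>(i, j). P i j) ` {(i, j). i < n \<and> j < n})"

end

theory Submission
  imports Defs
begin


lemma entry_set: "set_pmf (entry_pmf q) \<subseteq> {1 - q, - q}"
  unfolding entry_pmf_def by auto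

lemma entry_finite: "finite (set_pmf (entry_pmf q))"
  using entry_set by (rule finite_subset) auto

lemma entry_moment:
  assumes "0 \<le> q" "q \<le> 1"
  shows "measure_pmf.expectation (entry_pmf q) (\<lambda>z. z ^ c) = q * (1 - q) ^ c + (1 - q) * (- q) ^ c"
  using assms unfolding entry_pmf_def by simp

lemma entry_moment_1:
  assumes "0 \<le> q" "q \<le> 1"
  shows "measure_pmf.expectation (entry_pmf q) (\<lambda>z. z ^ 1) = 0"
  using entry_moment[OF assms, of 1] by simp

lemma entry_moment_ge2:
  assumes "0 \<le> q" "q \<le> 1" "2 \<le> c"
  shows "\<bar>measure_pmf.expectation (entry_pmf q) (\<lambda>z. z ^ c)\<bar> \<le> q"
proof -
  have a: "(1 - q) ^ c \<le> (1 - q) ^ 2" using assms by (intro power_decreasing) auto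
  have b: "q ^ c \<le> q ^ 2" using assms by (intro power_decreasing) auto
  have "\<bar>q * (1 - q) ^ c + (1 - q) * (- q) ^ c\<bar> \<le> q * (1 - q) ^ c + (1 - q) * q ^ c"
  proof -
    have "\<bar>(- q) ^ c\<bar> = q ^ c" using assms by (simp add: power_abs)
    moreover have "\<bar>(1 - q) ^ c\<bar> = (1 - q) ^ c" using assms by simp
    ultimately show ?thesis using assms abs_triangle_ineq[of "q * (1 - q) ^ c" "(1 - q) * (- q) ^ c"]
      by (simp add: abs_mult)
  qed
  also have "\<dots> \<le> q * (1 - q) ^ 2 + (1 - q) * q ^ 2"
    using assms a b by (intro add_mono mult_left_mono) auto
  also have "\<dots> \<le> q" using assms by (simp add: power2_eq_square algebra_simps)
  finally show ?thesis using assms by (simp add: entry_moment)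
qed

lemma exp_prod_Pi:
  fixes g :: "'a \<Rightarrow> real \<Rightarrow> real"
  assumes fin: "finite A" and fs: "\<And>x. x \<in> A \<Longrightarrow> finite (set_pmf (p x))"
  shows "measure_pmf.expectation (Pi_pmf A d p) (\<lambda>X. \<Prod>e\<in>A. g e (X e))
       = (\<Prod>e\<in>A. measure_pmf.expectation (p e) (g e))"
proof -
  have finset: "finite (set_pmf (Pi_pmf A d p))"
    using fin fs by (subst set_Pi_pmf[OF fin]) (intro finite_PiE_dflt, auto)
  have ind: "prob_space.indep_vars (measure_pmf (Pi_pmf A d p)) (\<lambda>_. borel) (\<lambda>e X. g e (X e)) A"
    by (intro prob_space.indep_vars_compose2[OF measure_pmf.prob_space_axioms indep_vars_Pi_pmf[OF fin]]) auto
  have "measure_pmf.expectation (Pi_pmf A d p) (\<lambda>X. \<Prod>e\<in>A. g e (X e))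
      = (\<Prod>e\<in>A. measure_pmf.expectation (Pi_pmf A d p) (\<lambda>X. g e (X e)))"
    by (rule prob_space.indep_vars_lebesgue_integral[OF measure_pmf.prob_space_axioms fin ind integrable_measure_pmf_finite[OF finset]])
  also have "\<dots> = (\<Prod>e\<in>A. measure_pmf.expectation (p e) (g e))"
  proof (rule prod.cong[OF refl])
    fix e assume e: "e \<in> A"
    have "measure_pmf.expectation (Pi_pmf A d p) (\<lambda>X. g e (X e))
        = measure_pmf.expectation (map_pmf (\<lambda>X. X e) (Pi_pmf A d p)) (g e)" by simp
    also have "\<dots> = measure_pmf.expectation (p e) (g e)"
      using e by (simp add: Pi_pmf_component[OF fin])
    finally show "measure_pmf.expectation (Pi_pmf A d p) (\<lambda>X. g e (X e)) = measure_pmf.expectation (p e) (g e)" .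
  qed
  finally show ?thesis .
qed




definition Wk :: "nat \<Rightarrow> nat \<Rightarrow> nat list set" where
  "Wk n k = {xs. set xs \<subseteq> {..<n} \<and> length xs = k}"

lemma finite_Wk: "finite (Wk n k)"
  unfolding Wk_def by (rule finite_lists_length_eq) auto

lemma Wk0: "Wk n 0 = {[]}"
  by (auto simp: Wk_def)

lemma sum_lists_Suc:
  fixes f :: "'a list \<Rightarrow> real"
  assumes "finite A"
  shows "(\<Sum>zs\<in>{zs. set zs \<subseteq> A \<and> length zs = Suc k}. f zs)
       = (\<Sum>a\<in>A. \<Sum>zs\<in>{zs. set zs \<subseteq> A \<and> length zs = k}. f (a # zs))"
proof -
  have "(\<Sum>zs\<in>{zs. set zs \<subseteq> A \<and> length zs = Suc k}. f zs)
      = (\<Sum>p\<in>{zs. set zs \<subseteq> A \<and> length zs = k} \<times> A. f (snd p # fst p))"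
    by (subst lists_length_Suc_eq, subst sum.reindex[OF inj_split_Cons])
       (simp add: case_prod_beta)
  also have "\<dots> = (\<Sum>zs\<in>{zs. set zs \<subseteq> A \<and> length zs = k}. \<Sum>a\<in>A. f (a # zs))"
    by (simp add: sum.cartesian_product case_prod_beta)
  also have "\<dots> = (\<Sum>a\<in>A. \<Sum>zs\<in>{zs. set zs \<subseteq> A \<and> length zs = k}. f (a # zs))"
    by (rule sum.swap)
  finally show ?thesis .
qed

lemma cnt1:
  fixes r :: real
  assumes "finite A" "r \<ge> 0"
  shows "(\<Sum>xs\<in>Wk n k. (if card (A \<union> set xs) \<le> V then r ^ (card (A \<union> set xs) - card A) else 0))
         \<le> (real V + real n * r) ^ k"
  using assms(1)
proof (induction k arbitrary: A)
  case 0
  show ?case unfolding Wk0 by simp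
next
  case (Suc k)
  define B where "B = (real V + real n * r) ^ k"
  have B0: "B \<ge> 0" unfolding B_def using assms(2) by simp
  show ?case
  proof (cases "card A \<le> V")
    case False
    have "(if card (A \<union> set xs) \<le> V then r ^ (card (A \<union> set xs) - card A) else 0) = 0" for xs
    proof -
      have "card A \<le> card (A \<union> set xs)" using Suc.prems by (intro card_mono) auto
      thus ?thesis using False by auto
    qed
    then show ?thesis using B0 assms(2) by simp
  next
    case True
    have step: "(\<Sum>xs\<in>Wk n k. (if card (A \<union> set (j # xs)) \<le> V then r ^ (card (A \<union> set (j # xs)) - card A) else 0))
        \<le> (if j \<in> A then B else r * B)" for j
    proof (cases "j \<in> A")
      case True
      have eqs: "A \<union> set (j # xs) = A \<union> set xs" for xs using True by auto
      have "(\<Sum>xs\<in>Wk n k. (if card (A \<union> set (j # xs)) \<le> V then r ^ (card (A \<union> set (j # xs)) - card A) else 0))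
        = (\<Sum>xs\<in>Wk n k. (if card (A \<union> set xs) \<le> V then r ^ (card (A \<union> set xs) - card A) else 0))"
        by (simp only: eqs)
      then show ?thesis using True Suc.IH[OF Suc.prems] by (simp add: B_def)
    next
      case False
      have eq: "(if card (A \<union> set (j # xs)) \<le> V then r ^ (card (A \<union> set (j # xs)) - card A) else 0)
          = r * (if card (insert j A \<union> set xs) \<le> V then r ^ (card (insert j A \<union> set xs) - card (insert j A)) else 0)" for xs
      proof -
        have c1: "card (insert j A) = Suc (card A)" using False Suc.prems by simp
        have "card (insert j A) \<le> card (insert j A \<union> set xs)" using Suc.prems by (intro card_mono) auto
        hence "card (insert j A \<union> set xs) - card A = Suc (card (insert j A \<union> set xs) - card (insert j A))"
          using c1 by linarith
        moreover have "A \<union> set (j # xs) = insert j A \<union> set xs" by auto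
        ultimately show ?thesis by simp
      qed
      have "(\<Sum>xs\<in>Wk n k. (if card (A \<union> set (j # xs)) \<le> V then r ^ (card (A \<union> set (j # xs)) - card A) else 0))
          = r * (\<Sum>xs\<in>Wk n k. (if card (insert j A \<union> set xs) \<le> V then r ^ (card (insert j A \<union> set xs) - card (insert j A)) else 0))"
        unfolding sum_distrib_left by (rule sum.cong[OF refl eq])
      also have "\<dots> \<le> r * B"
        using Suc.IH[of "insert j A"] Suc.prems assms(2) by (intro mult_left_mono) (auto simp: B_def)
      finally show ?thesis using False by simp
    qed
    have "(\<Sum>xs\<in>Wk n (Suc k). (if card (A \<union> set xs) \<le> V then r ^ (card (A \<union> set xs) - card A) else 0))
        = (\<Sum>j<n. \<Sum>xs\<in>Wk n k. (if card (A \<union> set (j # xs)) \<le> V then r ^ (card (A \<union> set (j # xs)) - card A) else 0))"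
      unfolding Wk_def by (rule sum_lists_Suc) simp
    also have "\<dots> \<le> (\<Sum>j<n. (if j \<in> A then B else r * B))"
      by (intro sum_mono step)
    also have "\<dots> \<le> (\<Sum>j<n. (if j \<in> A then B else 0) + r * B)"
      using B0 assms(2) by (intro sum_mono) auto
    also have "\<dots> = B * card ({..<n} \<inter> A) + n * r * B"
      by (simp add: sum.distrib sum.If_cases)
    also have "\<dots> \<le> B * V + n * r * B"
    proof -
      have "card ({..<n} \<inter> A) \<le> card A" using Suc.prems by (intro card_mono) auto
      hence "real (card ({..<n} \<inter> A)) \<le> real V" using True by linarith
      thus ?thesis using B0 by (simp add: mult_left_mono)
    qed
    also have "\<dots> = (real V + real n * r) ^ Suc k" by (simp add: B_def algebra_simps)
    finally show ?thesis .
  qed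
qed




lemma cnt2:
  fixes r :: real
  assumes "finite A" "r \<ge> 0"
  shows "(\<Sum>gs\<in>{gs. set gs \<subseteq> Wk n k \<and> length gs = b}.
            (if card (A \<union> \<Union>(set ` set gs)) \<le> V then r ^ (card (A \<union> \<Union>(set ` set gs)) - card A) else 0))
         \<le> (real V + real n * r) ^ (b * k)"
  using assms(1)
proof (induction b arbitrary: A)
  case 0
  have e: "{gs. set gs \<subseteq> Wk n k \<and> length gs = 0} = {[]}" by auto
  show ?case unfolding e by simp
next
  case (Suc b)
  define B where "B = (real V + real n * r) ^ (b * k)"
  define f where "f = (\<lambda>A' :: nat set. (if card A' \<le> V then r ^ (card A' - card A) else 0))"
  have B0: "B \<ge> 0" unfolding B_def using assms(2) by simp
  have f0: "f A' \<ge> 0" for A' unfolding f_def using assms(2) by simp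
  have split: "(if card (A \<union> \<Union>(set ` set (xs # gs))) \<le> V then r ^ (card (A \<union> \<Union>(set ` set (xs # gs))) - card A) else 0)
     = f (A \<union> set xs) * (if card ((A \<union> set xs) \<union> \<Union>(set ` set gs)) \<le> V then r ^ (card ((A \<union> set xs) \<union> \<Union>(set ` set gs)) - card (A \<union> set xs)) else 0)" for xs gs
  proof -
    have e: "A \<union> \<Union>(set ` set (xs # gs)) = (A \<union> set xs) \<union> \<Union>(set ` set gs)" by auto
    have c1: "card A \<le> card (A \<union> set xs)" using Suc.prems by (intro card_mono) auto
    have c2: "card (A \<union> set xs) \<le> card ((A \<union> set xs) \<union> \<Union>(set ` set gs))" using Suc.prems by (intro card_mono) auto
    show ?thesis unfolding e f_def using c1 c2
      by (auto simp: power_add[symmetric])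
  qed
  have "(\<Sum>gs\<in>{gs. set gs \<subseteq> Wk n k \<and> length gs = Suc b}.
            (if card (A \<union> \<Union>(set ` set gs)) \<le> V then r ^ (card (A \<union> \<Union>(set ` set gs)) - card A) else 0))
     = (\<Sum>xs\<in>Wk n k. \<Sum>gs\<in>{gs. set gs \<subseteq> Wk n k \<and> length gs = b}.
            (if card (A \<union> \<Union>(set ` set (xs # gs))) \<le> V then r ^ (card (A \<union> \<Union>(set ` set (xs # gs))) - card A) else 0))"
    by (rule sum_lists_Suc[OF finite_Wk])
  also have "\<dots> = (\<Sum>xs\<in>Wk n k. f (A \<union> set xs) * (\<Sum>gs\<in>{gs. set gs \<subseteq> Wk n k \<and> length gs = b}.
            (if card ((A \<union> set xs) \<union> \<Union>(set ` set gs)) \<le> V then r ^ (card ((A \<union> set xs) \<union> \<Union>(set ` set gs)) - card (A \<union> set xs)) else 0)))"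
    unfolding sum_distrib_left by (intro sum.cong refl split)
  also have "\<dots> \<le> (\<Sum>xs\<in>Wk n k. f (A \<union> set xs) * B)"
    using Suc.IH Suc.prems f0 by (intro sum_mono mult_left_mono) (auto simp: B_def)
  also have "\<dots> = (\<Sum>xs\<in>Wk n k. f (A \<union> set xs)) * B" by (simp add: sum_distrib_right)
  also have "\<dots> \<le> (real V + real n * r) ^ k * B"
    using cnt1[OF Suc.prems assms(2), where n=n and k=k and V=V] B0 by (intro mult_right_mono) (auto simp: f_def)
  also have "\<dots> = (real V + real n * r) ^ (Suc b * k)" by (simp add: B_def power_add)
  finally show ?case .
qed




fun edg :: "nat \<Rightarrow> nat list \<Rightarrow> (nat \<times> nat) list" where
  "edg u [] = []"
| "edg u (j # xs) = (min u j, max u j) # edg j xs"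

fun lastv :: "nat \<Rightarrow> nat list \<Rightarrow> nat" where
  "lastv u [] = u"
| "lastv u (j # xs) = lastv j xs"

fun wv :: "(nat \<times> nat \<Rightarrow> real) \<Rightarrow> nat \<Rightarrow> nat list \<Rightarrow> (nat \<Rightarrow> real) \<Rightarrow> real" where
  "wv X u [] w = w u"
| "wv X u (j # xs) w = sym_mat X u j * wv X j xs w"

lemma wv_eq: "wv X u xs w = prod_list (map X (edg u xs)) * w (lastv u xs)"
  by (induction xs arbitrary: u) (auto simp: sym_mat_def)

lemma walk_expand: "(mat_vec n (sym_mat X) ^^ k) w u = (\<Sum>xs\<in>Wk n k. wv X u xs w)"
proof (induction k arbitrary: u)
  case 0
  have "Wk n 0 = {[]}" by (auto simp: Wk_def)
  then show ?case by simp
next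
  case (Suc k)
  have "(mat_vec n (sym_mat X) ^^ Suc k) w u = (\<Sum>j<n. sym_mat X u j * (mat_vec n (sym_mat X) ^^ k) w j)"
    by (simp add: mat_vec_def)
  also have "\<dots> = (\<Sum>j<n. \<Sum>xs\<in>Wk n k. wv X u (j # xs) w)"
    by (simp add: Suc.IH sum_distrib_left)
  also have "\<dots> = (\<Sum>xs\<in>Wk n (Suc k). wv X u xs w)"
    unfolding Wk_def by (rule sum_lists_Suc[symmetric]) simp
  finally show ?case .
qed

lemma pow_expand:
  "((mat_vec n (sym_mat X) ^^ k) w u) ^ b
   = (\<Sum>gs\<in>{gs. set gs \<subseteq> Wk n k \<and> length gs = b}. prod_list (map (\<lambda>xs. wv X u xs w) gs))"
proof (induction b)
  case 0
  have e: "{gs. set gs \<subseteq> Wk n k \<and> length gs = 0} = {[]}" by auto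
  show ?case unfolding e by simp
next
  case (Suc b)
  have "((mat_vec n (sym_mat X) ^^ k) w u) ^ Suc b
      = (\<Sum>xs\<in>Wk n k. wv X u xs w) * (\<Sum>gs\<in>{gs. set gs \<subseteq> Wk n k \<and> length gs = b}. prod_list (map (\<lambda>xs. wv X u xs w) gs))"
    by (simp only: power_Suc Suc.IH) (simp only: walk_expand)
  also have "\<dots> = (\<Sum>xs\<in>Wk n k. \<Sum>gs\<in>{gs. set gs \<subseteq> Wk n k \<and> length gs = b}. prod_list (map (\<lambda>xs. wv X u xs w) (xs # gs)))"
    by (simp add: sum_product)
  also have "\<dots> = (\<Sum>gs\<in>{gs. set gs \<subseteq> Wk n k \<and> length gs = Suc b}. prod_list (map (\<lambda>xs. wv X u xs w) gs))"
    by (rule sum_lists_Suc[symmetric, OF finite_Wk])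
  finally show ?case .
qed

lemma Pw_eq: "prod_list (map (\<lambda>xs. wv X u xs w) gs)
   = prod_list (map X (concat (map (edg u) gs))) * prod_list (map (\<lambda>xs. w (lastv u xs)) gs)"
  by (induction gs) (auto simp: wv_eq)

lemma prod_list_count:
  fixes f :: "'a \<Rightarrow> real"
  assumes "finite U" "set es \<subseteq> U"
  shows "prod_list (map f es) = (\<Prod>x\<in>U. f x ^ count_list es x)"
  using assms(2)
proof (induction es)
  case Nil
  then show ?case by simp
next
  case (Cons a es)
  have "(\<Prod>x\<in>U. f x ^ count_list (a # es) x) = (\<Prod>x\<in>U. (if x = a then f x else 1) * f x ^ count_list es x)"
    by (intro prod.cong) auto
  also have "\<dots> = (\<Prod>x\<in>U. (if x = a then f x else 1)) * (\<Prod>x\<in>U. f x ^ count_list es x)"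
    by (rule prod.distrib)
  also have "(\<Prod>x\<in>U. (if x = a then f x else 1)) = f a"
    using Cons.prems assms(1) by (simp add: prod.If_cases Int_absorb1)
  finally show ?case using Cons by simp
qed

lemma edg_length: "length (edg u xs) = length xs"
  by (induction xs arbitrary: u) auto

lemma edg_upper: "u < n \<Longrightarrow> set xs \<subseteq> {..<n} \<Longrightarrow> set (edg u xs) \<subseteq> upper_idx n"
  by (induction xs arbitrary: u) (auto simp: upper_idx_def)

lemma edg_sub: "set (edg u xs) \<subseteq> insert u (set xs) \<times> insert u (set xs)"
  by (induction xs arbitrary: u) (auto simp: min_def max_def)

lemma vert_edge:
  assumes "u \<in> A" "E0 \<subseteq> A \<times> A" "finite A" "finite E0"
  shows "card (A \<union> set xs) + card E0 \<le> card A + card (E0 \<union> set (edg u xs))"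
  using assms
proof (induction xs arbitrary: u A E0)
  case Nil
  then show ?case by simp
next
  case (Cons j xs)
  define A' where "A' = insert j A"
  define E' where "E' = insert (min u j, max u j) E0"
  have "u \<in> A'" "j \<in> A'" using Cons.prems by (auto simp: A'_def)
  have E'sub: "E' \<subseteq> A' \<times> A'" using Cons.prems by (auto simp: E'_def A'_def min_def max_def)
  have IH: "card (A' \<union> set xs) + card E' \<le> card A' + card (E' \<union> set (edg j xs))"
    using Cons.IH[of j A' E'] \<open>j \<in> A'\<close> E'sub Cons.prems by (auto simp: A'_def E'_def)
  have eA: "A' \<union> set xs = A \<union> set (j # xs)" by (auto simp: A'_def)
  have eE: "E' \<union> set (edg j xs) = E0 \<union> set (edg u (j # xs))" by (auto simp: E'_def)
  have key: "card A' + card E0 \<le> card A + card E'"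
  proof (cases "j \<in> A")
    case True
    then have "A' = A" by (auto simp: A'_def)
    moreover have "card E0 \<le> card E'" using Cons.prems by (auto simp: E'_def intro: card_mono)
    ultimately show ?thesis by simp
  next
    case False
    then have "(min u j, max u j) \<notin> E0" using Cons.prems by (auto simp: min_def max_def split: if_splits)
    then have "card E' = Suc (card E0)" using Cons.prems by (simp add: E'_def)
    moreover have "card A' = Suc (card A)" using False Cons.prems by (simp add: A'_def)
    ultimately show ?thesis by simp
  qed
  show ?case unfolding eA[symmetric] eE[symmetric] using IH key by linarith
qed

lemma vert_edge_multi:
  assumes "u \<in> A" "E0 \<subseteq> A \<times> A" "finite A" "finite E0"
  shows "card (A \<union> \<Union>(set ` set gs)) + card E0 \<le> card A + card (E0 \<union> set (concat (map (edg u) gs)))"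
  using assms
proof (induction gs arbitrary: A E0)
  case Nil
  then show ?case by simp
next
  case (Cons xs gs)
  define A' where "A' = A \<union> set xs"
  define E' where "E' = E0 \<union> set (edg u xs)"
  have 1: "card A' + card E0 \<le> card A + card E'"
    using vert_edge[OF Cons.prems] by (simp add: A'_def E'_def)
  have "E' \<subseteq> A' \<times> A'" using Cons.prems edg_sub[of u xs] by (auto simp: A'_def E'_def)
  then have 2: "card (A' \<union> \<Union>(set ` set gs)) + card E' \<le> card A' + card (E' \<union> set (concat (map (edg u) gs)))"
    using Cons.IH[of A' E'] Cons.prems by (auto simp: A'_def E'_def)
  have e1: "A' \<union> \<Union>(set ` set gs) = A \<union> \<Union>(set ` set (xs # gs))" by (auto simp: A'_def)
  have e2: "E' \<union> set (concat (map (edg u) gs)) = E0 \<union> set (concat (map (edg u) (xs # gs)))" by (auto simp: E'_def)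
  show ?case unfolding e1[symmetric] e2[symmetric] using 1 2 by linarith
qed




lemma entries_finite: "finite (set_pmf (entries_pmf n P))"
proof -
  have fU: "finite (upper_idx n)"
    by (rule finite_subset[of _ "{..<n} \<times> {..<n}"]) (auto simp: upper_idx_def)
  show ?thesis unfolding entries_pmf_def
    by (subst set_Pi_pmf[OF fU]) (intro finite_PiE_dflt fU, auto simp: entry_finite split: prod.splits)
qed

lemma finite_upper: "finite (upper_idx n)"
  by (rule finite_subset[of _ "{..<n} \<times> {..<n}"]) (auto simp: upper_idx_def)

lemma abs_prod_list_le:
  fixes f :: "'a \<Rightarrow> real"
  assumes "\<And>x. x \<in> set l \<Longrightarrow> \<bar>f x\<bar> \<le> W"
  shows "\<bar>prod_list (map f l)\<bar> \<le> W ^ length l"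
  using assms
proof (induction l)
  case Nil
  then show ?case by simp
next
  case (Cons a l)
  have "\<bar>prod_list (map f (a # l))\<bar> = \<bar>f a\<bar> * \<bar>prod_list (map f l)\<bar>" by (simp add: abs_mult)
  also have "\<dots> \<le> W * W ^ length l"
    using Cons by (intro mult_mono) (auto intro: order.trans[OF abs_ge_zero])
  finally show ?case by simp
qed

lemma lastv_in: "lastv u xs \<in> insert u (set xs)"
  by (induction xs arbitrary: u) auto

lemma length_concat_edg: "(\<And>xs. xs \<in> set gs \<Longrightarrow> length xs = k) \<Longrightarrow> length (concat (map (edg u) gs)) = length gs * k"
  by (induction gs) (auto simp: edg_length)

lemma moment:
  fixes P :: "nat \<Rightarrow> nat \<Rightarrow> real" and w :: "nat \<Rightarrow> real"
  assumes P01: "\<forall>i<n. \<forall>j<n. 0 \<le> P i j \<and> P i j \<le> p" and p1: "p \<le> 1" and u: "u < n"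
    and W: "\<forall>i<n. \<bar>w i\<bar> \<le> W" and th: "\<theta> \<ge> 1"
  shows "measure_pmf.expectation (entries_pmf n P) (\<lambda>X. ((mat_vec n (sym_mat X) ^^ k) w u) ^ (2 * m))
     \<le> W ^ (2 * m) * \<theta> ^ (m * k) * (real (m * k + 1) + real n * (p / \<theta>)) ^ (2 * m * k)"
proof -
  define G where "G = {gs. set gs \<subseteq> Wk n k \<and> length gs = 2 * m}"
  define U where "U = upper_idx n"
  define M where "M = entries_pmf n P"
  define es where "es = (\<lambda>gs. concat (map (edg u) gs))"
  define Vs where "Vs = (\<lambda>gs. {u} \<union> \<Union>(set ` set gs))"
  define L where "L = m * k"
  have finG: "finite G" unfolding G_def by (rule finite_lists_length_eq[OF finite_Wk])
  have finM: "finite (set_pmf M)" unfolding M_def by (rule entries_finite)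
  have p0: "0 \<le> p" using P01 u by (meson order.trans)
  have W0: "0 \<le> W" using W u by (meson abs_ge_zero order.trans)
  have th0: "\<theta> > 0" using th by simp
  have Mdef: "M = Pi_pmf U 0 (\<lambda>e. entry_pmf (P (fst e) (snd e)))"
    unfolding M_def entries_pmf_def U_def by (simp add: case_prod_beta')
  have per: "\<bar>measure_pmf.expectation M (\<lambda>X. prod_list (map (\<lambda>xs. wv X u xs w) gs))\<bar>
      \<le> W ^ (2 * m) * (\<theta> ^ L * (if card (Vs gs) \<le> L + 1 then (p / \<theta>) ^ (card (Vs gs) - card {u}) else 0))"
    if gs: "gs \<in> G" for gs
  proof -
    define c where "c = prod_list (map (\<lambda>xs. w (lastv u xs)) gs)"
    define cnt where "cnt = count_list (es gs)"
    have gsW: "\<And>xs. xs \<in> set gs \<Longrightarrow> set xs \<subseteq> {..<n} \<and> length xs = k" using gs by (auto simp: G_def Wk_def)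
    have lgs: "length gs = 2 * m" using gs by (simp add: G_def)
    have esU: "set (es gs) \<subseteq> U" unfolding es_def U_def using edg_upper[OF u] gsW by auto
    have les: "length (es gs) = 2 * m * k" unfolding es_def using length_concat_edg[of gs k u] gsW lgs by auto
    have cabs: "\<bar>c\<bar> \<le> W ^ (2 * m)"
    proof -
      have "\<bar>c\<bar> \<le> W ^ length gs" unfolding c_def
      proof (rule abs_prod_list_le)
        fix xs assume "xs \<in> set gs"
        then have "lastv u xs < n" using lastv_in[of u xs] gsW u by auto
        then show "\<bar>w (lastv u xs)\<bar> \<le> W" using W by auto
      qed
      then show ?thesis using lgs by simp
    qed
    have "measure_pmf.expectation M (\<lambda>X. prod_list (map (\<lambda>xs. wv X u xs w) gs))
        = measure_pmf.expectation M (\<lambda>X. c * (\<Prod>e\<in>U. X e ^ cnt e))"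
    proof (intro Bochner_Integration.integral_cong refl)
      fix X :: "nat \<times> nat \<Rightarrow> real"
      have pl: "prod_list (map X (concat (map (edg u) gs))) = (\<Prod>e\<in>U. X e ^ cnt e)"
        using prod_list_count[OF _ esU, of X] by (simp add: es_def cnt_def U_def finite_upper)
      show "prod_list (map (\<lambda>xs. wv X u xs w) gs) = c * (\<Prod>e\<in>U. X e ^ cnt e)"
        by (simp add: Pw_eq pl c_def mult.commute)
    qed
    also have "\<dots> = c * measure_pmf.expectation M (\<lambda>X. (\<Prod>e\<in>U. X e ^ cnt e))"
      by simp
    also have "measure_pmf.expectation M (\<lambda>X. (\<Prod>e\<in>U. X e ^ cnt e))
        = (\<Prod>e\<in>U. measure_pmf.expectation (entry_pmf (P (fst e) (snd e))) (\<lambda>z. z ^ cnt e))"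
      unfolding Mdef by (rule exp_prod_Pi) (auto simp: U_def finite_upper entry_finite)
    finally have eq: "measure_pmf.expectation M (\<lambda>X. prod_list (map (\<lambda>xs. wv X u xs w) gs))
       = c * (\<Prod>e\<in>U. measure_pmf.expectation (entry_pmf (P (fst e) (snd e))) (\<lambda>z. z ^ cnt e))" .
    have Pe: "0 \<le> P (fst e) (snd e) \<and> P (fst e) (snd e) \<le> p" if "e \<in> U" for e
      using that P01 by (auto simp: U_def upper_idx_def)
    show ?thesis
    proof (cases "\<exists>e\<in>set (es gs). cnt e = 1")
      case True
      then obtain e where e: "e \<in> set (es gs)" "cnt e = 1" by auto
      have "e \<in> U" using e esU by auto
      have "measure_pmf.expectation (entry_pmf (P (fst e) (snd e))) (\<lambda>z. z ^ cnt e) = 0"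
        using e entry_moment_1 Pe[OF \<open>e \<in> U\<close>] p1 by auto
      then have "(\<Prod>e\<in>U. measure_pmf.expectation (entry_pmf (P (fst e) (snd e))) (\<lambda>z. z ^ cnt e)) = 0"
        using \<open>e \<in> U\<close> by (intro prod_zero) (auto simp: U_def finite_upper)
      then show ?thesis using eq W0 th0 p0 by simp
    next
      case False
      have ge2: "cnt e \<ge> 2" if "e \<in> set (es gs)" for e
      proof -
        have "cnt e \<noteq> 0" using that by (simp add: cnt_def count_list_0_iff)
        then show ?thesis using False that by fastforce
      qed
      have prodb: "\<bar>\<Prod>e\<in>U. measure_pmf.expectation (entry_pmf (P (fst e) (snd e))) (\<lambda>z. z ^ cnt e)\<bar>
          \<le> (\<Prod>e\<in>U. (if e \<in> set (es gs) then p else 1))"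
        unfolding abs_prod
      proof (intro prod_mono conjI)
        fix e assume eU: "e \<in> U"
        show "0 \<le> \<bar>measure_pmf.expectation (entry_pmf (P (fst e) (snd e))) (\<lambda>z. z ^ cnt e)\<bar>" by simp
        show "\<bar>measure_pmf.expectation (entry_pmf (P (fst e) (snd e))) (\<lambda>z. z ^ cnt e)\<bar> \<le> (if e \<in> set (es gs) then p else 1)"
        proof (cases "e \<in> set (es gs)")
          case True
          then show ?thesis using entry_moment_ge2[of "P (fst e) (snd e)" "cnt e"] ge2[OF True] Pe[OF eU] p1 by auto
        next
          case False
          then have "cnt e = 0" by (simp add: cnt_def)
          then show ?thesis using False by simp
        qed
      qed
      have "(\<Prod>e\<in>U. (if e \<in> set (es gs) then p else 1)) = p ^ card (set (es gs))"
        using esU by (simp add: prod.If_cases finite_upper U_def Int_absorb1)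
      note prodb = prodb[unfolded this]
      have cE: "card (set (es gs)) \<le> L"
      proof -
        have "(\<Sum>e\<in>set (es gs). 2) \<le> (\<Sum>e\<in>set (es gs). cnt e)"
          by (intro sum_mono ge2)
        also have "\<dots> = length (es gs)" unfolding cnt_def by (rule sum_count_set) auto
        finally show ?thesis using les by (simp add: L_def)
      qed
      have cV: "card (Vs gs) \<le> 1 + card (set (es gs))"
        using vert_edge_multi[of u "{u}" "{}" gs] by (simp add: Vs_def es_def)
      have pp: "p ^ card (set (es gs)) \<le> p ^ (card (Vs gs) - 1)"
        using cV p0 p1 by (intro power_decreasing) auto
      have tt: "p ^ (card (Vs gs) - 1) \<le> \<theta> ^ L * (p / \<theta>) ^ (card (Vs gs) - 1)"
      proof -
        have "p ^ (card (Vs gs) - 1) = \<theta> ^ (card (Vs gs) - 1) * (p / \<theta>) ^ (card (Vs gs) - 1)"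
          using th0 by (simp add: power_divide)
        also have "\<dots> \<le> \<theta> ^ L * (p / \<theta>) ^ (card (Vs gs) - 1)"
          using th cV cE p0 th0 by (intro mult_right_mono power_increasing) auto
        finally show ?thesis .
      qed
      have "\<bar>measure_pmf.expectation M (\<lambda>X. prod_list (map (\<lambda>xs. wv X u xs w) gs))\<bar>
          = \<bar>c\<bar> * \<bar>\<Prod>e\<in>U. measure_pmf.expectation (entry_pmf (P (fst e) (snd e))) (\<lambda>z. z ^ cnt e)\<bar>"
        by (simp add: eq abs_mult)
      also have "\<dots> \<le> W ^ (2 * m) * p ^ card (set (es gs))"
        using cabs prodb W0 by (intro mult_mono) auto
      also have "\<dots> \<le> W ^ (2 * m) * (\<theta> ^ L * (p / \<theta>) ^ (card (Vs gs) - 1))"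
        using pp tt W0 by (intro mult_left_mono) auto
      finally show ?thesis using cV cE by simp
    qed
  qed
  have "measure_pmf.expectation M (\<lambda>X. ((mat_vec n (sym_mat X) ^^ k) w u) ^ (2 * m))
      = measure_pmf.expectation M (\<lambda>X. \<Sum>gs\<in>G. prod_list (map (\<lambda>xs. wv X u xs w) gs))"
    by (simp add: pow_expand G_def)
  also have "\<dots> = (\<Sum>gs\<in>G. measure_pmf.expectation M (\<lambda>X. prod_list (map (\<lambda>xs. wv X u xs w) gs)))"
    by (rule Bochner_Integration.integral_sum) (rule integrable_measure_pmf_finite[OF finM])
  also have "\<dots> \<le> (\<Sum>gs\<in>G. W ^ (2 * m) * (\<theta> ^ L * (if card (Vs gs) \<le> L + 1 then (p / \<theta>) ^ (card (Vs gs) - card {u}) else 0)))"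
    by (intro sum_mono order.trans[OF abs_ge_self per])
  also have "\<dots> = W ^ (2 * m) * \<theta> ^ L * (\<Sum>gs\<in>G. (if card ({u} \<union> \<Union>(set ` set gs)) \<le> L + 1 then (p / \<theta>) ^ (card ({u} \<union> \<Union>(set ` set gs)) - card {u}) else 0))"
    unfolding Vs_def by (simp add: sum_distrib_left mult.assoc)
  also have "\<dots> \<le> W ^ (2 * m) * \<theta> ^ L * (real (L + 1) + real n * (p / \<theta>)) ^ (2 * m * k)"
    using cnt2[of "{u}" "p / \<theta>", where n=n and k=k and b="2 * m" and V="L + 1"] p0 th0 W0
    by (intro mult_left_mono) (auto simp: G_def)
  finally show ?thesis by (simp add: M_def L_def)
qed




lemma moment2:
  fixes P :: "nat \<Rightarrow> nat \<Rightarrow> real" and w :: "nat \<Rightarrow> real"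
  assumes P01: "\<forall>i<n. \<forall>j<n. 0 \<le> P i j \<and> P i j \<le> p" and p1: "p \<le> 1" and u: "u < n"
    and W: "\<forall>i<n. \<bar>w i\<bar> \<le> W"
  shows "measure_pmf.expectation (entries_pmf n P) (\<lambda>X. ((mat_vec n (sym_mat X) ^^ k) w u) ^ (2 * m))
     \<le> W ^ (2 * m) * (4 * (real (m * k) + 1) * (real n * p + real (m * k) + 1)) ^ (m * k)"
proof -
  define L where "L = m * k"
  have p0: "0 \<le> p" using P01 u by (meson order.trans)
  have W0: "0 \<le> W" using W u by (meson abs_ge_zero order.trans)
  define \<theta> where "\<theta> = (real n * p + L + 1) / (L + 1)"
  have th: "\<theta> \<ge> 1" unfolding \<theta>_def using p0 by (simp add: field_simps)
  have th0: "\<theta> > 0" using th by simp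
  have npt: "real n * (p / \<theta>) \<le> real L + 1"
  proof -
    have "real n * (p / \<theta>) = real n * p * (L + 1) / (real n * p + L + 1)"
      unfolding \<theta>_def by (simp add: field_simps)
    also have "\<dots> \<le> (real n * p + L + 1) * (L + 1) / (real n * p + L + 1)"
      using p0 by (intro divide_right_mono mult_right_mono) auto
    also have "\<dots> = L + 1"
    proof -
      have pos: "real n * p + real L + 1 \<noteq> 0" using p0 by (smt (verit) of_nat_0_le_iff mult_nonneg_nonneg)
      show ?thesis by (metis pos nonzero_mult_div_cancel_left)
    qed
    finally show ?thesis by simp
  qed
  have "measure_pmf.expectation (entries_pmf n P) (\<lambda>X. ((mat_vec n (sym_mat X) ^^ k) w u) ^ (2 * m))
     \<le> W ^ (2 * m) * \<theta> ^ L * (real (L + 1) + real n * (p / \<theta>)) ^ (2 * L)"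
    using moment[OF P01 p1 u W th, of k m] by (simp add: L_def mult.assoc)
  also have "\<dots> \<le> W ^ (2 * m) * \<theta> ^ L * (2 * (real L + 1)) ^ (2 * L)"
    using npt W0 th0 p0 by (intro mult_left_mono power_mono) auto
  also have "\<dots> = W ^ (2 * m) * (\<theta> * (4 * (real L + 1) * (real L + 1))) ^ L"
  proof -
    have s1: "(2 * (real L + 1)) ^ (2 * L) = ((2 * (real L + 1))\<^sup>2) ^ L" by (simp add: power_mult)
    have s2: "(2 * (real L + 1))\<^sup>2 = 4 * (real L + 1) * (real L + 1)" by (simp add: power2_eq_square algebra_simps)
    have s3: "(2 * (real L + 1)) ^ (2 * L) = (4 * (real L + 1) * (real L + 1)) ^ L"
      by (simp only: s1 s2)
    show ?thesis unfolding s3 by (simp only: power_mult_distrib mult.assoc)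
  qed
  also have "\<theta> * (4 * (real L + 1) * (real L + 1)) = 4 * (real L + 1) * (real n * p + real L + 1)"
    unfolding \<theta>_def by (simp add: field_simps)
  finally show ?thesis by (simp add: L_def)
qed

lemma pmf_markov:
  fixes f :: "'a \<Rightarrow> real"
  assumes fin: "finite (set_pmf M)" and c: "c > 0" and f0: "\<And>x. f x \<ge> 0"
  shows "measure_pmf.prob M {x. f x \<ge> c} \<le> measure_pmf.expectation M f / c"
  using integral_Markov_inequality_measure[of M f UNIV c] integrable_measure_pmf_finite[OF fin] c f0
  by auto

lemma lin:
  assumes "i < n"
  shows "((mat_vec n A ^^ l) v) i = (\<Sum>j<n. v j * ((mat_vec n A ^^ l) (\<lambda>t. if t = j then 1 else 0)) i)"
  using assms
proof (induction l arbitrary: i)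
  case 0
  then show ?case by (simp add: if_distrib cong: if_cong)
next
  case (Suc l)
  have "((mat_vec n A ^^ Suc l) v) i = (\<Sum>t<n. A i t * ((mat_vec n A ^^ l) v) t)"
    by (simp add: mat_vec_def)
  also have "\<dots> = (\<Sum>t<n. A i t * (\<Sum>j<n. v j * ((mat_vec n A ^^ l) (\<lambda>t. if t = j then 1 else 0)) t))"
    by (intro sum.cong refl) (simp add: Suc.IH)
  also have "\<dots> = (\<Sum>j<n. v j * (\<Sum>t<n. A i t * ((mat_vec n A ^^ l) (\<lambda>t. if t = j then 1 else 0)) t))"
    unfolding sum_distrib_left by (subst sum.swap) (simp add: mult.left_commute)
  also have "\<dots> = (\<Sum>j<n. v j * ((mat_vec n A ^^ Suc l) (\<lambda>t. if t = j then 1 else 0)) i)"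
    by (simp add: mat_vec_def)
  finally show ?case .
qed

definition nrm :: "nat \<Rightarrow> (nat \<Rightarrow> real) \<Rightarrow> real" where
  "nrm n v = (\<Sum>i<n. (v i)\<^sup>2)"

definition Frob :: "nat \<Rightarrow> (nat \<Rightarrow> nat \<Rightarrow> real) \<Rightarrow> nat \<Rightarrow> real" where
  "Frob n A l = (\<Sum>i<n. \<Sum>j<n. (((mat_vec n A ^^ l) (\<lambda>t. if t = j then 1 else 0)) i)\<^sup>2)"

lemma nrm_nonneg: "nrm n v \<ge> 0"
  unfolding nrm_def by (simp add: sum_nonneg)

lemma cs_step: "nrm n ((mat_vec n A ^^ l) v) \<le> Frob n A l * nrm n v"
proof -
  have "nrm n ((mat_vec n A ^^ l) v)
      = (\<Sum>i<n. (\<Sum>j<n. ((mat_vec n A ^^ l) (\<lambda>t. if t = j then 1 else 0)) i * v j)\<^sup>2)"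
    unfolding nrm_def by (intro sum.cong refl) (simp add: lin mult.commute)
  also have "\<dots> \<le> (\<Sum>i<n. (\<Sum>j<n. (((mat_vec n A ^^ l) (\<lambda>t. if t = j then 1 else 0)) i)\<^sup>2) * (\<Sum>j<n. (v j)\<^sup>2))"
    by (intro sum_mono Cauchy_Schwarz_ineq_sum)
  also have "\<dots> = Frob n A l * nrm n v"
    unfolding Frob_def nrm_def by (simp add: sum_distrib_right)
  finally show ?thesis .
qed

lemma chain:
  assumes J: "J \<ge> 1" and b0: "\<beta> \<ge> 0"
    and blk: "\<And>l v. J \<le> l \<Longrightarrow> l < 2 * J \<Longrightarrow> nrm n ((mat_vec n A ^^ l) v) \<le> \<beta> ^ l * nrm n v"
  shows "J \<le> k \<Longrightarrow> nrm n ((mat_vec n A ^^ k) v) \<le> \<beta> ^ k * nrm n v"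
proof (induction k arbitrary: v rule: less_induct)
  case (less k)
  show ?case
  proof (cases "k < 2 * J")
    case True
    then show ?thesis using blk less.prems by auto
  next
    case False
    have kk: "k = J + (k - J)" using less.prems by simp
    have "(mat_vec n A ^^ k) v = (mat_vec n A ^^ J) ((mat_vec n A ^^ (k - J)) v)"
      by (subst kk) (simp add: funpow_add)
    then have "nrm n ((mat_vec n A ^^ k) v) \<le> \<beta> ^ J * nrm n ((mat_vec n A ^^ (k - J)) v)"
      using blk[of J] J by auto
    also have "\<dots> \<le> \<beta> ^ J * (\<beta> ^ (k - J) * nrm n v)"
      using less.IH[of "k - J" v] False J b0 by (intro mult_left_mono) auto
    also have "\<dots> = \<beta> ^ k * nrm n v"
    proof -
      have "\<beta> ^ J * \<beta> ^ (k - J) = \<beta> ^ k" by (metis kk power_add)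
      then show ?thesis by (simp add: mult.assoc[symmetric])
    qed
    finally show ?thesis .
  qed
qed




lemma ratio_bound:
  fixes C lnn np :: real and J L :: nat
  assumes l1: "lnn \<ge> 1" and C: "C \<ge> 4000" and np: "np \<ge> 10000 * lnn"
    and J: "real J \<le> C * lnn + 1" and L: "L \<le> 2 * J"
  shows "16 * (real L + 1) * (np + real L + 1) \<le> C\<^sup>2 * (np * lnn) / 27"
proof -
  have Cl: "C * lnn \<ge> 4000" using mult_mono[OF C l1] C by simp
  have x: "real L + 1 \<le> 3 * C * lnn" using L J Cl by linarith
  have x0: "0 \<le> real L + 1" by simp
  have np0: "np \<ge> 0" using np l1 by linarith
  have "16 * (real L + 1) * (np + real L + 1) \<le> 16 * (3 * C * lnn) * (np + 3 * C * lnn)"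
    using x x0 np0 by (intro mult_mono) auto
  also have "\<dots> = 48 * (C * lnn * np) + 144 * (C\<^sup>2 * lnn) * lnn"
    by (simp add: algebra_simps power2_eq_square)
  also have "48 * (C * lnn * np) \<le> (C * lnn * np) * C / 54"
  proof -
    have "0 \<le> C * lnn * np" using C l1 np0 by simp
    then have "(C * lnn * np) * (48 * 54) \<le> (C * lnn * np) * C" using C by (intro mult_left_mono) auto
    then show ?thesis by simp
  qed
  also have "144 * (C\<^sup>2 * lnn) * lnn \<le> (C\<^sup>2 * lnn) * np / 54"
  proof -
    have "0 \<le> C\<^sup>2 * lnn" using l1 by simp
    then have "(C\<^sup>2 * lnn) * (144 * 54 * lnn) \<le> (C\<^sup>2 * lnn) * np" using np l1 by (intro mult_left_mono) auto
    then show ?thesis by simp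
  qed
  also have "C * lnn * np * C / 54 + C\<^sup>2 * lnn * np / 54 = C\<^sup>2 * (np * lnn) / 27"
    by (simp add: algebra_simps power2_eq_square)
  finally show ?thesis by simp
qed

lemma exp3: "exp (3::real) \<le> 27"
proof -
  have "exp (3::real) = exp 1 ^ 3" by (simp add: exp_of_nat_mult[symmetric])
  also have "\<dots> \<le> 3 ^ 3" using exp_le by (intro power_mono) auto
  finally show ?thesis by simp
qed

lemma pow27: "(1 / 27 :: real) ^ l \<le> exp (- 3 * real l)"
proof -
  have "(1 / 27 :: real) \<le> exp (-3)" using exp3 by (simp add: exp_minus field_simps)
  then have "(1 / 27 :: real) ^ l \<le> exp (-3) ^ l" by (intro power_mono) auto
  also have "\<dots> = exp (- 3 * real l)" by (simp add: exp_of_nat_mult[symmetric] mult.commute)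
  finally show ?thesis .
qed




lemma pmax_facts:
  assumes n: "n > 0" and hP: "\<forall>i<n. \<forall>j<n. 0 \<le> P i j \<and> P i j \<le> 1"
  shows "\<forall>i<n. \<forall>j<n. 0 \<le> P i j \<and> P i j \<le> pmax n P" "pmax n P \<le> 1"
proof -
  define Q where "Q = (\<lambda>(i, j). P i j) ` {(i, j). i < n \<and> j < n}"
  have fin: "finite Q" unfolding Q_def
    by (rule finite_imageI, rule finite_subset[of _ "{..<n} \<times> {..<n}"]) auto
  have ne: "Q \<noteq> {}" using n unfolding Q_def by auto
  have "P i j \<le> pmax n P" if "i < n" "j < n" for i j
    unfolding pmax_def Q_def[symmetric] using that fin by (intro Max_ge) (auto simp: Q_def)
  then show "\<forall>i<n. \<forall>j<n. 0 \<le> P i j \<and> P i j \<le> pmax n P" using hP by auto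
  show "pmax n P \<le> 1"
    unfolding pmax_def Q_def[symmetric] using fin ne hP by (auto simp: Q_def)
qed

lemma signal_abs: "\<bar>signal n S i\<bar> = 1 / sqrt (real n)"
  by (simp add: signal_def)

lemma nrm_signal:
  assumes "n > 0" shows "nrm n (signal n S) = 1"
proof -
  have "(signal n S i)\<^sup>2 = 1 / real n" for i
    by (simp add: signal_def power_divide)
  then show ?thesis using assms by (simp add: nrm_def)
qed

lemma exp_Frob:
  fixes P :: "nat \<Rightarrow> nat \<Rightarrow> real"
  assumes P01: "\<forall>i<n. \<forall>j<n. 0 \<le> P i j \<and> P i j \<le> p" and p1: "p \<le> 1"
  shows "measure_pmf.expectation (entries_pmf n P) (\<lambda>X. Frob n (sym_mat X) l)
     \<le> real n * real n * (4 * (real l + 1) * (real n * p + real l + 1)) ^ l"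
proof -
  have fin: "finite (set_pmf (entries_pmf n P))" by (rule entries_finite)
  have "measure_pmf.expectation (entries_pmf n P) (\<lambda>X. Frob n (sym_mat X) l)
      = (\<Sum>i<n. \<Sum>j<n. measure_pmf.expectation (entries_pmf n P)
            (\<lambda>X. (((mat_vec n (sym_mat X) ^^ l) (\<lambda>t. if t = j then 1 else 0)) i) ^ (2 * 1)))"
    unfolding Frob_def
    by (simp add: Bochner_Integration.integral_sum integrable_measure_pmf_finite[OF fin])
  also have "\<dots> \<le> (\<Sum>i<n. \<Sum>j<n. (4 * (real l + 1) * (real n * p + real l + 1)) ^ l)"
  proof (intro sum_mono)
    fix i j assume i: "i \<in> {..<n}" and j: "j \<in> {..<n}"
    have W: "\<forall>t<n. \<bar>(if t = j then 1 else 0 :: real)\<bar> \<le> 1" by simp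
    show "measure_pmf.expectation (entries_pmf n P)
            (\<lambda>X. (((mat_vec n (sym_mat X) ^^ l) (\<lambda>t. if t = j then 1 else 0)) i) ^ (2 * 1))
          \<le> (4 * (real l + 1) * (real n * p + real l + 1)) ^ l"
      using moment2[OF P01 p1 _ W, of i l 1] i by simp
  qed
  also have "\<dots> = real n * real n * (4 * (real l + 1) * (real n * p + real l + 1)) ^ l"
    by simp
  finally show ?thesis .
qed




lemma main:
  fixes n :: nat and P :: "nat \<Rightarrow> nat \<Rightarrow> real" and S :: "nat set" and u k :: nat and C :: real
  assumes n3: "n \<ge> 3" and hP: "\<forall>i<n. \<forall>j<n. P i j = P j i \<and> 0 \<le> P i j \<and> P i j \<le> 1"
    and hp: "pmax n P \<ge> 10000 * ln (real n) ^ 3 / real n" and u: "u < n" and k: "k \<ge> 1" and C: "C \<ge> 4000"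
  shows "measure_pmf.prob (entries_pmf n P)
      {X. \<bar>((mat_vec n (sym_mat X)) ^^ k) (signal n S) u\<bar>
            > (1 / sqrt (real n)) * (C * sqrt (real n * pmax n P * ln (real n))) ^ k}
    \<le> exp (- 1 * C * ln (real n))"
proof -
  define p where "p = pmax n P"
  define lnn where "lnn = ln (real n)"
  define M where "M = entries_pmf n P"
  define s where "s = signal n S"
  define a2 where "a2 = real n * p * lnn"
  define T where "T = 1 / sqrt (real n) * (C * sqrt a2) ^ k"
  define Y where "Y = (\<lambda>X. ((mat_vec n (sym_mat X)) ^^ k) s u)"
  have n0: "n > 0" "real n \<ge> 3" using n3 by auto
  have lnn1: "lnn \<ge> 1"
  proof -
    have "exp 1 \<le> real n" using exp_le n0 by linarith
    then have "ln (exp 1) \<le> ln (real n)" using n0 by (subst ln_le_cancel_iff) auto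
    then show ?thesis by (simp add: lnn_def)
  qed
  have hP': "\<forall>i<n. \<forall>j<n. 0 \<le> P i j \<and> P i j \<le> 1" using hP by auto
  have P01: "\<forall>i<n. \<forall>j<n. 0 \<le> P i j \<and> P i j \<le> p" using pmax_facts(1)[OF n0(1) hP'] by (simp add: p_def)
  have p1: "p \<le> 1" using pmax_facts(2)[OF n0(1) hP'] by (simp add: p_def)
  have np: "real n * p \<ge> 10000 * lnn ^ 3"
  proof -
    have "10000 * lnn ^ 3 = real n * (10000 * lnn ^ 3 / real n)" using n0 by simp
    also have "\<dots> \<le> real n * p" using hp by (intro mult_left_mono) (auto simp: p_def lnn_def)
    finally show ?thesis .
  qed
  have np2: "real n * p \<ge> 10000 * lnn"
  proof -
    have "lnn ^ 1 \<le> lnn ^ 3" using lnn1 by (intro power_increasing) auto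
    then show ?thesis using np by simp
  qed
  have p0: "p > 0"
  proof (rule ccontr)
    assume "\<not> p > 0"
    then have "real n * p \<le> 0" using n0 by (simp add: mult_nonneg_nonpos)
    then show False using np2 lnn1 by linarith
  qed
  have a2pos: "a2 > 0" unfolding a2_def using p0 n0 lnn1 by simp
  have C0: "C > 0" using C by simp
  have T0: "T > 0" unfolding T_def using a2pos C0 n0 by simp
  have sq: "(sqrt a2)\<^sup>2 = a2" using a2pos by simp
  define J where "J = nat \<lceil>C * lnn\<rceil>"
  have CL: "C * lnn \<ge> 4000" using mult_mono[OF C lnn1] C by simp
  have J1: "C * lnn \<le> real J" "real J \<le> C * lnn + 1"
    unfolding J_def using CL by (auto simp: of_nat_nat)
  have Jpos: "J \<ge> 1" using J1 CL by linarith
  have fin: "finite (set_pmf M)" unfolding M_def by (rule entries_finite)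
  define goalb where "goalb = exp (- 1 * C * lnn)"
  have lC: "2 * lnn \<le> C * lnn" using mult_right_mono[of 2 C lnn] C lnn1 by simp
  have e3J: "exp (- 3 * real J) \<le> goalb"
  proof -
    have "- 3 * real J \<le> - 1 * C * lnn" using J1 CL by linarith
    then show ?thesis unfolding goalb_def by simp
  qed
  have main: "measure_pmf.prob M {X. T < \<bar>Y X\<bar>} \<le> goalb"
  proof (cases "k < J")
    case True
    define m where "m = J div k + 1"
    define L where "L = m * k"
    have kpos: "k > 0" using k by simp
    have dm: "J div k * k + J mod k = J" by simp
    have md: "J mod k < k" using kpos by simp
    have Leq: "L = J div k * k + k" by (simp add: L_def m_def algebra_simps)
    have LJ: "J \<le> L" "L \<le> 2 * J" using dm md Leq True by linarith+
    have sub: "{X. T < \<bar>Y X\<bar>} \<subseteq> {X. T ^ (2 * m) \<le> (Y X) ^ (2 * m)}"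
    proof
      fix X assume "X \<in> {X. T < \<bar>Y X\<bar>}"
      then have "T ^ (2 * m) \<le> \<bar>Y X\<bar> ^ (2 * m)" using T0 by (intro power_mono) auto
      then show "X \<in> {X. T ^ (2 * m) \<le> (Y X) ^ (2 * m)}" by (simp add: power_even_abs)
    qed
    have "measure_pmf.prob M {X. T < \<bar>Y X\<bar>} \<le> measure_pmf.prob M {X. T ^ (2 * m) \<le> (Y X) ^ (2 * m)}"
      by (rule measure_pmf.finite_measure_mono[OF sub]) simp
    also have "\<dots> \<le> measure_pmf.expectation M (\<lambda>X. (Y X) ^ (2 * m)) / T ^ (2 * m)"
      using T0 by (intro pmf_markov fin) (auto simp: zero_le_even_power)
    also have "\<dots> \<le> ((1 / sqrt (real n)) ^ (2 * m) * (4 * (real L + 1) * (real n * p + real L + 1)) ^ L) / T ^ (2 * m)"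
    proof (intro divide_right_mono)
      have W: "\<forall>i<n. \<bar>s i\<bar> \<le> 1 / sqrt (real n)" by (simp add: s_def signal_abs)
      show "measure_pmf.expectation M (\<lambda>X. (Y X) ^ (2 * m)) \<le> (1 / sqrt (real n)) ^ (2 * m) * (4 * (real L + 1) * (real n * p + real L + 1)) ^ L"
        using moment2[OF P01 p1 u W, of k m] by (simp add: M_def Y_def L_def)
      show "0 \<le> T ^ (2 * m)" using T0 by simp
    qed
    also have "T ^ (2 * m) = (1 / sqrt (real n)) ^ (2 * m) * (C\<^sup>2 * a2) ^ L"
    proof -
      have "((C * sqrt a2) ^ k) ^ (2 * m) = ((C * sqrt a2)\<^sup>2) ^ L"
      proof -
        have e: "k * (2 * m) = 2 * L" by (simp add: L_def)
        have "((C * sqrt a2) ^ k) ^ (2 * m) = (C * sqrt a2) ^ (k * (2 * m))" by (simp only: power_mult)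
        also have "\<dots> = ((C * sqrt a2)\<^sup>2) ^ L" by (simp only: e power_mult)
        finally show ?thesis .
      qed
      also have "\<dots> = (C\<^sup>2 * a2) ^ L" by (simp add: power_mult_distrib sq)
      finally have X: "((C * sqrt a2) ^ k) ^ (2 * m) = (C\<^sup>2 * a2) ^ L" .
      show ?thesis unfolding T_def by (simp only: power_mult_distrib[of "1 / sqrt (real n)"] X)
    qed
    also have "((1 / sqrt (real n)) ^ (2 * m) * (4 * (real L + 1) * (real n * p + real L + 1)) ^ L) /
        ((1 / sqrt (real n)) ^ (2 * m) * (C\<^sup>2 * a2) ^ L)
        = ((4 * (real L + 1) * (real n * p + real L + 1)) / (C\<^sup>2 * a2)) ^ L"
      using n0 by (simp add: power_divide)
    also have "\<dots> \<le> (1 / 27) ^ L"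
    proof (intro power_mono)
      have rb: "16 * (real L + 1) * (real n * p + real L + 1) \<le> C\<^sup>2 * (real n * p * lnn) / 27"
        by (rule ratio_bound[OF lnn1 C np2 J1(2) LJ(2)])
      have Q0: "C\<^sup>2 * a2 > 0" using a2pos C0 by simp
      have "4 * (real L + 1) * (real n * p + real L + 1) \<le> (C\<^sup>2 * a2) / 27"
      proof -
        have R0: "0 \<le> (real L + 1) * (real n * p + real L + 1)" using p0 by simp
        have "4 * (real L + 1) * (real n * p + real L + 1) \<le> 16 * (real L + 1) * (real n * p + real L + 1)"
          using R0 by (simp only: mult.assoc)
        then show ?thesis using rb unfolding a2_def by linarith
      qed
      then show "4 * (real L + 1) * (real n * p + real L + 1) / (C\<^sup>2 * a2) \<le> 1 / 27"
        using Q0 by (simp add: divide_le_eq field_simps)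
      show "0 \<le> 4 * (real L + 1) * (real n * p + real L + 1) / (C\<^sup>2 * a2)"
        using p0 a2pos by simp
    qed
    also have "\<dots> \<le> exp (- 3 * real L)" by (rule pow27)
    also have "\<dots> \<le> exp (- 3 * real J)" using LJ by simp
    also have "\<dots> \<le> goalb" by (rule e3J)
    finally show ?thesis .
  next
    case False
    then have kJ: "J \<le> k" by simp
    define \<beta> where "\<beta> = C\<^sup>2 * a2 / 4"
    have b0: "\<beta> > 0" unfolding \<beta>_def using a2pos C0 by simp
    define B where "B = (\<lambda>l. {X. \<beta> ^ l \<le> Frob n (sym_mat X) l})"
    have sub: "{X. T < \<bar>Y X\<bar>} \<subseteq> (\<Union>l\<in>{J..<2 * J}. B l)"
    proof
      fix X assume XT: "X \<in> {X. T < \<bar>Y X\<bar>}"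
      show "X \<in> (\<Union>l\<in>{J..<2 * J}. B l)"
      proof (rule ccontr)
        assume "X \<notin> (\<Union>l\<in>{J..<2 * J}. B l)"
        then have Fl: "\<And>l. J \<le> l \<Longrightarrow> l < 2 * J \<Longrightarrow> Frob n (sym_mat X) l < \<beta> ^ l"
          by (auto simp: B_def not_le)
        have blk: "nrm n ((mat_vec n (sym_mat X) ^^ l) v) \<le> \<beta> ^ l * nrm n v"
          if "J \<le> l" "l < 2 * J" for l v
        proof -
          have "nrm n ((mat_vec n (sym_mat X) ^^ l) v) \<le> Frob n (sym_mat X) l * nrm n v" by (rule cs_step)
          also have "\<dots> \<le> \<beta> ^ l * nrm n v"
            using Fl[OF that] nrm_nonneg[of n v] by (intro mult_right_mono) auto
          finally show ?thesis .
        qed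
        have "nrm n ((mat_vec n (sym_mat X) ^^ k) s) \<le> \<beta> ^ k * nrm n s"
          by (rule chain[OF Jpos _ blk kJ]) (use b0 in auto)
        also have "nrm n s = 1" unfolding s_def by (rule nrm_signal[OF n0(1)])
        finally have N1: "nrm n ((mat_vec n (sym_mat X) ^^ k) s) \<le> \<beta> ^ k" by simp
        have "(Y X)\<^sup>2 \<le> nrm n ((mat_vec n (sym_mat X) ^^ k) s)"
          unfolding Y_def nrm_def using u by (intro member_le_sum) auto
        also have "\<dots> \<le> \<beta> ^ k" by (rule N1)
        also have "\<beta> ^ k \<le> T\<^sup>2"
        proof -
          have n4: "real n \<le> 4 ^ k"
          proof -
            have "real n = exp lnn" unfolding lnn_def using n0 by simp
            also have "\<dots> \<le> exp (real k)"
            proof -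
              have "real J \<le> real k" using kJ by simp
              then have "lnn \<le> real k" using J1 lC lnn1 by linarith
              then show ?thesis by simp
            qed
            also have "\<dots> = exp 1 ^ k" by (simp add: exp_of_nat_mult[symmetric])
            also have "\<dots> \<le> 4 ^ k" using exp_le by (intro power_mono) auto
            finally show ?thesis .
          qed
          have "T\<^sup>2 = (C\<^sup>2 * a2) ^ k / real n"
          proof -
            have X1: "((C * sqrt a2) ^ k)\<^sup>2 = ((C * sqrt a2)\<^sup>2) ^ k" by (metis power_mult mult.commute)
            have X2: "(C * sqrt a2)\<^sup>2 = C\<^sup>2 * a2" by (simp add: power_mult_distrib sq)
            have X3: "(1 / sqrt (real n))\<^sup>2 = 1 / real n" using n0 by (simp add: power_divide)
            show ?thesis unfolding T_def power_mult_distrib[of "1 / sqrt (real n)"] X1 X2 X3 by simp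
          qed
          moreover have "\<beta> ^ k = (C\<^sup>2 * a2) ^ k / 4 ^ k" by (simp add: \<beta>_def power_divide)
          moreover have "(C\<^sup>2 * a2) ^ k / 4 ^ k \<le> (C\<^sup>2 * a2) ^ k / real n"
            using n4 n0 a2pos by (intro divide_left_mono) auto
          ultimately show ?thesis by simp
        qed
        finally have "(Y X)\<^sup>2 \<le> T\<^sup>2" .
        then have "\<bar>Y X\<bar> \<le> T" using power2_le_imp_le[of "\<bar>Y X\<bar>" T] T0 by simp
        then show False using XT by simp
      qed
    qed
    have "measure_pmf.prob M {X. T < \<bar>Y X\<bar>} \<le> measure_pmf.prob M (\<Union>l\<in>{J..<2 * J}. B l)"
      by (rule measure_pmf.finite_measure_mono[OF sub]) simp
    also have "\<dots> \<le> (\<Sum>l\<in>{J..<2 * J}. measure_pmf.prob M (B l))"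
      by (rule measure_pmf.finite_measure_subadditive_finite) auto
    also have "\<dots> \<le> (\<Sum>l\<in>{J..<2 * J}. real n * real n * exp (- 3 * real J))"
    proof (intro sum_mono)
      fix l assume l: "l \<in> {J..<2 * J}"
      have "measure_pmf.prob M (B l) \<le> measure_pmf.expectation M (\<lambda>X. Frob n (sym_mat X) l) / \<beta> ^ l"
        unfolding B_def using b0
        by (intro pmf_markov fin) (auto simp: Frob_def intro!: sum_nonneg)
      also have "\<dots> \<le> real n * real n * (4 * (real l + 1) * (real n * p + real l + 1)) ^ l / \<beta> ^ l"
        using exp_Frob[OF P01 p1, of l] b0 by (intro divide_right_mono) (auto simp: M_def)
      also have "\<dots> = real n * real n * ((4 * (real l + 1) * (real n * p + real l + 1)) / \<beta>) ^ l"
        by (simp add: power_divide)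
      also have "\<dots> \<le> real n * real n * (1 / 27) ^ l"
      proof (intro mult_left_mono power_mono)
        have rb: "16 * (real l + 1) * (real n * p + real l + 1) \<le> C\<^sup>2 * (real n * p * lnn) / 27"
          using l by (intro ratio_bound[OF lnn1 C np2 J1(2)]) auto
        then show "4 * (real l + 1) * (real n * p + real l + 1) / \<beta> \<le> 1 / 27"
          using b0 unfolding \<beta>_def a2_def by (simp add: divide_le_eq field_simps)
        show "0 \<le> 4 * (real l + 1) * (real n * p + real l + 1) / \<beta>" using p0 b0 by simp
      qed simp
      also have "\<dots> \<le> real n * real n * exp (- 3 * real l)"
        by (intro mult_left_mono pow27) simp
      also have "\<dots> \<le> real n * real n * exp (- 3 * real J)"
        using l by (intro mult_left_mono) auto
      finally show "measure_pmf.prob M (B l) \<le> real n * real n * exp (- 3 * real J)" .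
    qed
    also have "\<dots> = real J * (real n * real n * exp (- 3 * real J))" by simp
    also have "\<dots> \<le> exp (real J) * (real n * real n * exp (- 3 * real J))"
    proof (intro mult_right_mono)
      show "real J \<le> exp (real J)" using exp_ge_add_one_self[of "real J"] by linarith
    qed simp
    also have "\<dots> = exp (2 * lnn - 2 * real J)"
    proof -
      have en: "exp lnn = real n" unfolding lnn_def using n0 by simp
      have "exp (2 * lnn) = exp lnn * exp lnn" by (simp only: mult_2 exp_add)
      then have nn: "real n * real n = exp (2 * lnn)" by (simp only: en)
      have "exp (real J) * (real n * real n * exp (- 3 * real J))
          = exp (real J) * (exp (2 * lnn) * exp (- 3 * real J))" by (simp only: nn)
      also have "\<dots> = exp (real J + (2 * lnn + - 3 * real J))" by (simp only: exp_add)
      also have "real J + (2 * lnn + - 3 * real J) = 2 * lnn - 2 * real J" by simp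
      finally show ?thesis .
    qed
    also have "\<dots> \<le> goalb"
    proof -
      have "2 * lnn - 2 * real J \<le> - 1 * C * lnn" using J1 lC by linarith
      then show ?thesis unfolding goalb_def by simp
    qed
    finally show ?thesis .
  qed
  then show ?thesis
    by (simp add: M_def Y_def T_def s_def a2_def p_def lnn_def goalb_def)
qed


theorem proposition9:
  shows "\<exists>c0 > 0. \<exists>C0 > 0. \<exists>\<delta> > 0. \<exists>N. \<forall>n \<ge> N. \<forall>P S u k C.
    (\<forall>i < n. \<forall>j < n. P i j = P j i \<and> 0 \<le> P i j \<and> P i j \<le> 1) \<and>
    S \<subseteq> {..<n} \<and> 2 * card S = n \<and>
    pmax n P \<ge> c0 * ln (real n) ^ 3 / real n \<and>
    u < n \<and> k \<ge> 1 \<and> C \<ge> C0 \<longrightarrow>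
    measure_pmf.prob (entries_pmf n P)
      {X. \<bar>((mat_vec n (sym_mat X)) ^^ k) (signal n S) u\<bar>
            > (1 / sqrt (real n)) * (C * sqrt (real n * pmax n P * ln (real n))) ^ k}
    \<le> exp (- \<delta> * C * ln (real n))"
proof -
  have H: "\<forall>n \<ge> 3. \<forall>P S u k C.
    (\<forall>i < n. \<forall>j < n. P i j = P j i \<and> 0 \<le> P i j \<and> P i j \<le> 1) \<and>
    S \<subseteq> {..<n} \<and> 2 * card S = n \<and>
    pmax n P \<ge> 10000 * ln (real n) ^ 3 / real n \<and>
    u < n \<and> k \<ge> 1 \<and> C \<ge> 4000 \<longrightarrow>
    measure_pmf.prob (entries_pmf n P)
      {X. \<bar>((mat_vec n (sym_mat X)) ^^ k) (signal n S) u\<bar>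
            > (1 / sqrt (real n)) * (C * sqrt (real n * pmax n P * ln (real n))) ^ k}
    \<le> exp (- 1 * C * ln (real n))"
    using main by blast
  show ?thesis
    apply (rule exI[of _ "10000::real"], rule conjI, simp)
    apply (rule exI[of _ "4000::real"], rule conjI, simp)
    apply (rule exI[of _ "1::real"], rule conjI, simp)
    apply (rule exI[of _ "3::nat"])
    using H by blast
qed

end
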